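(* If $M$ is a simple rank-$r$ matroid that has no $3$-element circuit and no $3$-claw, then $|E(M)| \ge 2^{r-1}$. If equality holds, then $M \cong \mathrm{AG}(r-1,2)$.
   Context: A claw of a matroid $M$ is a set that is both a flat and an independent set of $M$; a $k$-claw is a claw of size $k$. $\mathrm{AG}(r-1,2)$ is the rank-$r$ binary affine geometry, obtained from the binary projective geometry $\mathrm{PG}(r-1,2)$ by deleting a hyperplane. *)

theory Defs
  imports Main "HOL-Library.Z2"
begin

definition matroid :: "'a set \<Rightarrow> ('a set \<Rightarrow> bool) \<Rightarrow> bool" where
  "matroid E indep \<longleftrightarrow>
     finite E \<and> indep {} \<and>
     (\<forall>X. indep X \<longrightarrow> X \<subseteq> E) \<and>
     (\<forall>X Y. indep X \<and> Y \<subseteq> X \<longrightarrow> indep Y) \<and>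
     (\<forall>X Y. indep X \<and> indep Y \<and> card X < card Y \<longrightarrow>
        (\<exists>y\<in>Y - X. indep (insert y X)))"

definition mrank :: "('a set \<Rightarrow> bool) \<Rightarrow> 'a set \<Rightarrow> nat" where
  "mrank indep X = Max {card I | I. I \<subseteq> X \<and> indep I}"

definition mclosure :: "'a set \<Rightarrow> ('a set \<Rightarrow> bool) \<Rightarrow> 'a set \<Rightarrow> 'a set" where
  "mclosure E indep X = {e \<in> E. mrank indep (insert e X) = mrank indep X}"

definition flat :: "'a set \<Rightarrow> ('a set \<Rightarrow> bool) \<Rightarrow> 'a set \<Rightarrow> bool" where
  "flat E indep X \<longleftrightarrow> X \<subseteq> E \<and> mclosure E indep X = X"

definition circuit :: "'a set \<Rightarrow> ('a set \<Rightarrow> bool) \<Rightarrow> 'a set \<Rightarrow> bool" where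
  "circuit E indep C \<longleftrightarrow> C \<subseteq> E \<and> \<not> indep C \<and> (\<forall>x\<in>C. indep (C - {x}))"

definition simple_matroid :: "'a set \<Rightarrow> ('a set \<Rightarrow> bool) \<Rightarrow> bool" where
  "simple_matroid E indep \<longleftrightarrow> (\<forall>C. circuit E indep C \<longrightarrow> card C \<ge> 3)"

definition claw :: "'a set \<Rightarrow> ('a set \<Rightarrow> bool) \<Rightarrow> 'a set \<Rightarrow> bool" where
  "claw E indep X \<longleftrightarrow> flat E indep X \<and> indep X"

definition matroid_iso ::
  "'a set \<Rightarrow> ('a set \<Rightarrow> bool) \<Rightarrow> 'b set \<Rightarrow> ('b set \<Rightarrow> bool) \<Rightarrow> bool" where
  "matroid_iso E1 indep1 E2 indep2 \<longleftrightarrow>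
     (\<exists>f. bij_betw f E1 E2 \<and> (\<forall>X \<subseteq> E1. indep1 X \<longleftrightarrow> indep2 (f ` X)))"

text \<open>Vectors of GF(2)^r are modelled as functions nat => bit vanishing outside {0..<r}.
  Linear independence over GF(2).\<close>
definition gf2_lin_indep :: "(nat \<Rightarrow> bit) set \<Rightarrow> bool" where
  "gf2_lin_indep S \<longleftrightarrow> finite S \<and>
     (\<forall>c :: (nat \<Rightarrow> bit) \<Rightarrow> bit.
        (\<forall>i. (\<Sum>v\<in>S. c v * v i) = 0) \<longrightarrow> (\<forall>v\<in>S. c v = 0))"

text \<open>AG(r-1,2): PG(r-1,2) (nonzero vectors of GF(2)^r, as a vector matroid) with the
  hyperplane {x. x 0 = 0} deleted, i.e. the vectors with first coordinate 1.\<close>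
definition AG_ground :: "nat \<Rightarrow> (nat \<Rightarrow> bit) set" where
  "AG_ground r = {v. v 0 = 1 \<and> (\<forall>i\<ge>r. v i = 0)}"

definition AG_indep :: "nat \<Rightarrow> (nat \<Rightarrow> bit) set \<Rightarrow> bool" where
  "AG_indep r X \<longleftrightarrow> X \<subseteq> AG_ground r \<and> gf2_lin_indep X"

end

theory Submission
  imports Defs
begin


locale matr =
  fixes E :: "'a set" and indep :: "'a set \<Rightarrow> bool"
  assumes M: "matroid E indep"
begin

abbreviation "rk \<equiv> mrank indep"
abbreviation "cl \<equiv> mclosure E indep"

lemma finE: "finite E" using M unfolding matroid_def by blast
lemma indep_empty: "indep {}" using M unfolding matroid_def by blast
lemma indep_sub: "indep X \<Longrightarrow> X \<subseteq> E" using M unfolding matroid_def by blast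
lemma indep_mono: "indep X \<Longrightarrow> Y \<subseteq> X \<Longrightarrow> indep Y" using M unfolding matroid_def by blast
lemma aug: "indep X \<Longrightarrow> indep Y \<Longrightarrow> card X < card Y \<Longrightarrow> \<exists>y\<in>Y - X. indep (insert y X)"
  using M unfolding matroid_def by blast
lemma indep_fin: "indep X \<Longrightarrow> finite X" using indep_sub finE finite_subset by blast
lemma indep_card: "indep X \<Longrightarrow> card X \<le> card E" using indep_sub finE card_mono by blast

lemma rk_set: "finite {card I | I. I \<subseteq> X \<and> indep I}" "{card I | I. I \<subseteq> X \<and> indep I} \<noteq> {}"
proof -
  have "{card I | I. I \<subseteq> X \<and> indep I} \<subseteq> {0..card E}" using indep_card by auto
  then show "finite {card I | I. I \<subseteq> X \<and> indep I}" using finite_subset by blast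
  show "{card I | I. I \<subseteq> X \<and> indep I} \<noteq> {}" using indep_empty by blast
qed

lemma rk_ge: "indep I \<Longrightarrow> I \<subseteq> X \<Longrightarrow> card I \<le> rk X"
  unfolding mrank_def using rk_set by (intro Max_ge) auto

lemma rk_obtain: "\<exists>I. I \<subseteq> X \<and> indep I \<and> card I = rk X"
proof -
  have "rk X \<in> {card I | I. I \<subseteq> X \<and> indep I}" unfolding mrank_def using rk_set by (rule Max_in)
  then show ?thesis by auto
qed

lemma rk_indep: "indep I \<Longrightarrow> rk I = card I"
proof -
  assume i: "indep I"
  obtain J where "J \<subseteq> I" "indep J" "card J = rk I" using rk_obtain by blast
  then have "rk I \<le> card I" using card_mono indep_fin[OF i] by metis
  with rk_ge[OF i order_refl] show ?thesis by simp
qed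

lemma rk_mono: assumes "X \<subseteq> Y" shows "rk X \<le> rk Y"
proof -
  obtain I where "I \<subseteq> X" "indep I" "card I = rk X" using rk_obtain by blast
  then show ?thesis using rk_ge[of I Y] assms by auto
qed

lemma aug1: assumes "indep I" "I \<subseteq> X" "card I < rk X" shows "\<exists>y\<in>X - I. indep (insert y I)"
proof -
  obtain J where "J \<subseteq> X" "indep J" "card J = rk X" using rk_obtain by blast
  with aug[OF assms(1) \<open>indep J\<close>] assms show ?thesis by auto
qed

lemma ext_lemma: "indep I \<Longrightarrow> I \<subseteq> X \<Longrightarrow> \<exists>J. I \<subseteq> J \<and> J \<subseteq> X \<and> indep J \<and> card J = rk X"
proof (induction "rk X - card I" arbitrary: I rule: less_induct)
  case less
  show ?case
  proof (cases "card I < rk X")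
    case True
    then obtain y where y: "y \<in> X - I" "indep (insert y I)" using aug1 less.prems by blast
    have "card (insert y I) = Suc (card I)" using y indep_fin less.prems by auto
    then have "rk X - card (insert y I) < rk X - card I" using True by simp
    from less.hyps[OF this y(2)] y less.prems show ?thesis by blast
  next
    case False
    then show ?thesis using rk_ge less.prems by (intro exI[of _ I]) (auto simp: le_antisym)
  qed
qed

lemma rk_le_card: "finite X \<Longrightarrow> rk X \<le> card X"
  by (metis rk_obtain card_mono)

lemma rk_insert_le: "rk (insert e X) \<le> Suc (rk X)"
proof -
  obtain J where J: "J \<subseteq> insert e X" "indep J" "card J = rk (insert e X)" using rk_obtain by blast
  have "J - {e} \<subseteq> X" "indep (J - {e})" using J indep_mono by auto
  then have "card (J - {e}) \<le> rk X" using rk_ge by blast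
  moreover have "card J \<le> Suc (card (J - {e}))"
    using indep_fin[OF J(2)] by (cases "e \<in> J") (auto simp: card_Suc_Diff1)
  ultimately show ?thesis using J by simp
qed

lemma rk_E_le: "X \<subseteq> E \<Longrightarrow> rk X \<le> rk E" by (rule rk_mono)

lemma cl_sub: "cl X \<subseteq> E" unfolding mclosure_def by auto

lemma cl_incl: "X \<subseteq> E \<Longrightarrow> X \<subseteq> cl X"
  unfolding mclosure_def by (auto simp: insert_absorb)

lemma cl_mem: "e \<in> cl X \<longleftrightarrow> e \<in> E \<and> rk (insert e X) = rk X"
  unfolding mclosure_def by auto

lemma cl_char: assumes "indep I" "e \<in> E" "e \<notin> I"
  shows "e \<in> cl I \<longleftrightarrow> \<not> indep (insert e I)"
proof
  assume "e \<in> cl I"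
  then have "rk (insert e I) = card I" using rk_indep[OF assms(1)] cl_mem by simp
  moreover have "card (insert e I) = Suc (card I)" using assms indep_fin by simp
  ultimately show "\<not> indep (insert e I)" using rk_indep by fastforce
next
  assume ni: "\<not> indep (insert e I)"
  have "rk (insert e I) \<le> card I"
  proof (rule ccontr)
    assume "\<not> ?thesis"
    then have "rk (insert e I) \<ge> card (insert e I)" using assms indep_fin by simp
    moreover obtain J where J: "J \<subseteq> insert e I" "indep J" "card J = rk (insert e I)" using rk_obtain by blast
    ultimately have "J = insert e I" using indep_fin assms
      by (metis card_seteq finite.insertI)
    with J ni show False by simp
  qed
  moreover have "card I \<le> rk (insert e I)" using rk_ge assms by blast
  ultimately show "e \<in> cl I" using cl_mem assms rk_indep by simp
qed

lemma cl_mono: assumes "X \<subseteq> Y" shows "cl X \<subseteq> cl Y"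
proof
  fix e assume e: "e \<in> cl X"
  obtain I where I: "I \<subseteq> X" "indep I" "card I = rk X" using rk_obtain by blast
  have IY: "I \<subseteq> Y" using I(1) assms by (rule order_trans)
  obtain J where J: "I \<subseteq> J" "J \<subseteq> Y" "indep J" "card J = rk Y" using ext_lemma[OF I(2) IY] by blast
  show "e \<in> cl Y"
  proof (rule ccontr)
    assume ne: "e \<notin> cl Y"
    have eE: "e \<in> E" using e cl_mem by simp
    have "rk (insert e Y) \<noteq> rk Y" using ne eE cl_mem by simp
    moreover have "rk Y \<le> rk (insert e Y)" by (rule rk_mono) (rule subset_insertI)
    ultimately have "card J < rk (insert e Y)" using J(4) by linarith
    moreover have "J \<subseteq> insert e Y" using J(2) by blast
    ultimately obtain y where y: "y \<in> insert e Y - J" "indep (insert y J)" using aug1[OF J(3)] by blast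
    have "y = e"
    proof (rule ccontr)
      assume "y \<noteq> e" then have "insert y J \<subseteq> Y" using y J by auto
      then have "card (insert y J) \<le> rk Y" using rk_ge y by blast
      moreover have "card (insert y J) = Suc (card J)" using y indep_fin J by auto
      ultimately show False using J by simp
    qed
    then have "insert e I \<subseteq> insert y J" using J by auto
    then have "indep (insert e I)" using y indep_mono by blast
    moreover have "e \<notin> I" using y \<open>y = e\<close> J by auto
    moreover have "insert e I \<subseteq> insert e X" using I by auto
    ultimately have "card (insert e I) \<le> rk (insert e X)" using rk_ge by blast
    moreover have "card (insert e I) = Suc (card I)" using \<open>e \<notin> I\<close> indep_fin I by auto
    ultimately show False using e cl_mem I by simp
  qed
qed

lemma rk_cl: "rk (cl X) = rk X"
proof -
  obtain I where I: "I \<subseteq> X" "indep I" "card I = rk X" using rk_obtain by blast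
  have "I \<subseteq> cl I" using cl_incl indep_sub I(2) by blast
  moreover have "cl I \<subseteq> cl X" using cl_mono I(1) by blast
  ultimately have "I \<subseteq> cl X" by blast
  obtain J where J: "I \<subseteq> J" "J \<subseteq> cl X" "indep J" "card J = rk (cl X)" using ext_lemma[OF I(2) \<open>I \<subseteq> cl X\<close>] by blast
  have Jf: "finite J" using J(3) indep_fin by blast
  have "J = I"
  proof (rule ccontr)
    assume "J \<noteq> I" then obtain y where y: "y \<in> J" "y \<notin> I" using J by blast
    have "insert y I \<subseteq> J" using y J by blast
    then have "indep (insert y I)" using J(3) indep_mono by blast
    moreover have "insert y I \<subseteq> insert y X" using I by auto
    ultimately have "card (insert y I) \<le> rk (insert y X)" using rk_ge by blast
    moreover have "rk (insert y X) = rk X" using y J cl_mem by auto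
    moreover have "card (insert y I) = Suc (card I)" using y indep_fin I by auto
    ultimately show False using I by simp
  qed
  then show ?thesis using J I by simp
qed

lemma cl_idem: "cl (cl X) = cl X"
proof
  show "cl (cl X) \<subseteq> cl X"
  proof
    fix e assume e: "e \<in> cl (cl X)"
    then have eE: "e \<in> E" using cl_mem by blast
    have "rk (insert e (cl X)) = rk X" using e cl_mem rk_cl by simp
    moreover have "rk (insert e X) \<le> rk (insert e (cl X))"
    proof -
      obtain I where I: "I \<subseteq> insert e X" "indep I" "card I = rk (insert e X)" using rk_obtain by blast
      have "I \<subseteq> insert e (X \<inter> E)" using I indep_sub by blast
      moreover have "X \<inter> E \<subseteq> cl X" using cl_incl[of "X \<inter> E"] cl_mono[of "X \<inter> E" X] by auto
      ultimately have "I \<subseteq> insert e (cl X)" by blast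
      then show ?thesis using rk_ge I by metis
    qed
    moreover have "rk X \<le> rk (insert e X)" by (rule rk_mono) auto
    ultimately show "e \<in> cl X" using eE cl_mem by simp
  qed
  show "cl X \<subseteq> cl (cl X)" using cl_incl[OF cl_sub] .
qed

lemma flat_cl: "flat E indep (cl X)" unfolding flat_def using cl_sub cl_idem by simp

lemma flat_cl_eq: "flat E indep F \<Longrightarrow> cl F = F" unfolding flat_def by simp
lemma flat_sub: "flat E indep F \<Longrightarrow> F \<subseteq> E" unfolding flat_def by simp

lemma cl_notin_rk: assumes "e \<in> E" "e \<notin> cl X" shows "rk (insert e X) = Suc (rk X)"
  using assms cl_mem rk_insert_le[of e X] rk_mono[OF subset_insertI, of X e] by force

lemma indep_iff_cl: assumes "X \<subseteq> E" shows "indep X \<longleftrightarrow> (\<forall>x\<in>X. x \<notin> cl (X - {x}))"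
proof
  assume i: "indep X"
  show "\<forall>x\<in>X. x \<notin> cl (X - {x})"
  proof
    fix x assume x: "x \<in> X"
    have "indep (X - {x})" using i indep_mono by blast
    moreover have "insert x (X - {x}) = X" using x by auto
    ultimately show "x \<notin> cl (X - {x})" using cl_char[of "X - {x}" x] i x assms by auto
  qed
next
  assume h: "\<forall>x\<in>X. x \<notin> cl (X - {x})"
  show "indep X"
  proof (rule ccontr)
    assume ni: "\<not> indep X"
    obtain I where I: "I \<subseteq> X" "indep I" "card I = rk X" using rk_obtain by blast
    have "I \<noteq> X" using I ni by auto
    then obtain x where x: "x \<in> X" "x \<notin> I" using I by blast
    have "\<not> indep (insert x I)"
    proof
      assume "indep (insert x I)"
      then have "card (insert x I) \<le> rk X" using rk_ge I x by blast
      moreover have "card (insert x I) = Suc (card I)" using x indep_fin I by auto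
      ultimately show False using I by simp
    qed
    then have "x \<in> cl I" using cl_char I x assms by blast
    moreover have "cl I \<subseteq> cl (X - {x})" using I x by (intro cl_mono) auto
    ultimately show False using h x by blast
  qed
qed

lemma span_flat: assumes "indep I" "I \<subseteq> F" "flat E indep F" "card I = rk F"
  shows "cl I = F"
proof
  show "cl I \<subseteq> F" using cl_mono[OF assms(2)] flat_cl_eq[OF assms(3)] by simp
  show "F \<subseteq> cl I"
  proof
    fix x assume x: "x \<in> F"
    show "x \<in> cl I"
    proof (cases "x \<in> I")
      case True then show ?thesis using cl_incl indep_sub assms by blast
    next
      case False
      have "\<not> indep (insert x I)"
      proof
        assume "indep (insert x I)"
        then have "card (insert x I) \<le> rk F" using rk_ge assms x by blast
        moreover have "card (insert x I) = Suc (card I)" using False indep_fin assms by auto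
        ultimately show False using assms by simp
      qed
      then show ?thesis using cl_char assms False x flat_sub by blast
    qed
  qed
qed

lemma flat_full: assumes "flat E indep F" "rk F = rk E" shows "F = E"
proof -
  have "E \<subseteq> cl F"
  proof
    fix e assume e: "e \<in> E"
    have "rk (insert e F) \<le> rk E" using e flat_sub[OF assms(1)] by (intro rk_mono) auto
    moreover have "rk F \<le> rk (insert e F)" by (rule rk_mono) auto
    ultimately show "e \<in> cl F" using e assms cl_mem by simp
  qed
  then show ?thesis using flat_cl_eq[OF assms(1)] flat_sub[OF assms(1)] by auto
qed

lemma cl_insert_cl: assumes "X \<subseteq> E" "e \<in> E" shows "cl (insert e (cl X)) = cl (insert e X)"
proof
  have h: "insert e (cl X) \<subseteq> cl (insert e X)"
    using cl_mono[of X "insert e X"] cl_incl[of "insert e X"] assms by auto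
  show "cl (insert e (cl X)) \<subseteq> cl (insert e X)" using cl_mono[OF h] by (simp add: cl_idem)
  show "cl (insert e X) \<subseteq> cl (insert e (cl X))" using cl_incl[OF assms(1)] by (intro cl_mono) auto
qed

end


locale nice = matr +
  fixes r :: nat
  assumes simple: "simple_matroid E indep"
    and no3c: "\<not> (\<exists>C. circuit E indep C \<and> card C = 3)"
    and no3claw: "\<not> (\<exists>X. claw E indep X \<and> card X = 3)"
    and rkE: "rk E = r"
begin

lemma circuit_exists: "finite D \<Longrightarrow> D \<subseteq> E \<Longrightarrow> \<not> indep D \<Longrightarrow> \<exists>C\<subseteq>D. circuit E indep C"
proof (induction "card D" arbitrary: D rule: less_induct)
  case less
  show ?case
  proof (cases "\<forall>x\<in>D. indep (D - {x})")
    case True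
    then have "circuit E indep D" using less.prems unfolding circuit_def by simp
    then show ?thesis by blast
  next
    case False
    then obtain x where x: "x \<in> D" "\<not> indep (D - {x})" by blast
    have "card (D - {x}) < card D" using card_Diff1_less[OF _ x(1)] less.prems by blast
    moreover have "finite (D - {x})" "D - {x} \<subseteq> E" using less.prems by auto
    ultimately obtain C where "C \<subseteq> D - {x}" "circuit E indep C" using less.hyps[of "D - {x}"] x(2) by blast
    then show ?thesis by blast
  qed
qed

lemma circ_card: assumes c: "circuit E indep C" shows "card C \<ge> 4"
proof -
  have "card C \<ge> 3" using simple c unfolding simple_matroid_def by blast
  moreover have "card C \<noteq> 3" using no3c c by blast
  ultimately show ?thesis by linarith
qed

lemma small_indep: assumes "X \<subseteq> E" "card X \<le> 3" shows "indep X"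
proof (rule ccontr)
  assume ni: "\<not> indep X"
  have f: "finite X" using finite_subset[OF assms(1) finE] .
  obtain C where C: "C \<subseteq> X" "circuit E indep C" using circuit_exists[OF f assms(1) ni] by blast
  have "card C \<le> card X" using card_mono[OF f C(1)] .
  with circ_card[OF C(2)] assms show False by simp
qed

lemma indep3: "a \<in> E \<Longrightarrow> b \<in> E \<Longrightarrow> c \<in> E \<Longrightarrow> indep {a,b,c}"
proof (rule small_indep)
  show "card {a,b,c} \<le> 3"
    by (rule card_insert_le_m1, simp, rule card_insert_le_m1, simp, rule card_insert_le_m1, simp_all)
qed auto

lemma indep2: "a \<in> E \<Longrightarrow> b \<in> E \<Longrightarrow> indep {a,b}"
  using indep3[of a b b] by simp

lemma indep1: "a \<in> E \<Longrightarrow> indep {a}"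
  by (rule small_indep) auto

lemma cl_empty: "cl {} = {}"
proof -
  have "x \<notin> cl {}" for x
  proof
    assume x: "x \<in> cl {}"
    then have "x \<in> E" using cl_sub by blast
    then show False using cl_char[of "{}" x] indep1 indep_empty x by simp
  qed
  then show ?thesis by blast
qed

lemma cl_single: assumes "e \<in> E" shows "cl {e} = {e}"
proof -
  have "x \<notin> cl {e}" if "x \<noteq> e" for x
  proof
    assume x: "x \<in> cl {e}"
    then have "x \<in> E" using cl_sub by blast
    then show False using cl_char[of "{e}" x] indep1 indep2 x that assms by simp
  qed
  moreover have "e \<in> cl {e}" using cl_incl[of "{e}"] assms by simp
  ultimately show ?thesis by blast
qed

lemma card3: "a \<noteq> b \<Longrightarrow> a \<noteq> c \<Longrightarrow> b \<noteq> c \<Longrightarrow> card {a,b,c} = 3"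
  by simp

lemma rk3: assumes "a \<in> E" "b \<in> E" "c \<in> E" "a \<noteq> b" "a \<noteq> c" "b \<noteq> c"
  shows "rk {a,b,c} = 3" "rk (cl {a,b,c}) = 3"
  using rk_indep[OF indep3[OF assms(1-3)]] assms rk_cl by simp_all

definition t :: "'a \<Rightarrow> 'a \<Rightarrow> 'a \<Rightarrow> 'a" where
  "t a b c = (SOME w. w \<in> cl {a,b,c} \<and> w \<notin> {a,b,c})"

lemma t_ex: assumes "a \<in> E" "b \<in> E" "c \<in> E" "a \<noteq> b" "a \<noteq> c" "b \<noteq> c"
  shows "t a b c \<in> cl {a,b,c}" "t a b c \<noteq> a" "t a b c \<noteq> b" "t a b c \<noteq> c"
proof -
  have i: "indep {a,b,c}" using indep3[OF assms(1-3)] .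
  have c3: "card {a,b,c} = 3" using assms by simp
  have "\<not> claw E indep {a,b,c}" using no3claw c3 by blast
  then have "cl {a,b,c} \<noteq> {a,b,c}" using i assms unfolding claw_def flat_def by auto
  moreover have "{a,b,c} \<subseteq> cl {a,b,c}" using cl_incl[of "{a,b,c}"] assms by simp
  ultimately have "\<exists>w. w \<in> cl {a,b,c} \<and> w \<notin> {a,b,c}" by blast
  then have "t a b c \<in> cl {a,b,c} \<and> t a b c \<notin> {a,b,c}" unfolding t_def by (rule someI_ex)
  then show "t a b c \<in> cl {a,b,c}" "t a b c \<noteq> a" "t a b c \<noteq> b" "t a b c \<noteq> c" by auto
qed

lemma t_E: assumes "a \<in> E" "b \<in> E" "c \<in> E" "a \<noteq> b" "a \<noteq> c" "b \<noteq> c"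
  shows "t a b c \<in> E" using t_ex[OF assms] cl_sub by blast

lemma t_perm1: "t a b c = t b a c" unfolding t_def by (simp add: insert_commute)
lemma t_perm2: "t a b c = t a c b" unfolding t_def by (simp add: insert_commute)

lemma K: assumes "a \<in> E" "b \<in> E" "c \<in> E" "a \<noteq> b" "a \<noteq> c" "b \<noteq> c"
  and "x \<noteq> y" "x \<noteq> z" "y \<noteq> z" "x \<in> cl {a,b,c}" "y \<in> cl {a,b,c}" "z \<in> cl {a,b,c}"
  shows "cl {x,y,z} = cl {a,b,c}"
proof -
  have E: "x \<in> E" "y \<in> E" "z \<in> E" using assms cl_sub by auto
  show ?thesis
    by (rule span_flat[OF indep3[OF E]]) (use assms flat_cl rk3[OF assms(1-6)] in auto)
qed

lemma t_cl_swap: assumes "a \<in> E" "b \<in> E" "c \<in> E" "a \<noteq> b" "a \<noteq> c" "b \<noteq> c"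
  shows "a \<in> cl {b,c,t a b c}"
proof -
  have "cl {b,c,t a b c} = cl {a,b,c}"
    using t_ex[OF assms] assms cl_incl[of "{a,b,c}"] by (intro K) auto
  then show ?thesis using cl_incl[of "{a,b,c}"] assms by auto
qed

context
  fixes F f0 e
  assumes fl: "flat E indep F" and f0: "f0 \<in> F" and eE: "e \<in> E" and eF: "e \<notin> F"
begin

lemma FE: "F \<subseteq> E" using fl flat_sub by blast

lemma IL1: assumes "f \<in> F" "f \<noteq> f0"
  shows "t e f0 f \<in> cl (insert e F)" "t e f0 f \<notin> F" "t e f0 f \<noteq> e"
proof -
  have E: "e \<in> E" "f0 \<in> E" "f \<in> E" using eE f0 assms FE by auto
  have ne: "e \<noteq> f0" "e \<noteq> f" "f0 \<noteq> f" using eF f0 assms by auto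
  note tx = t_ex[OF E ne]
  show "t e f0 f \<in> cl (insert e F)" using tx(1) cl_mono[of "{e,f0,f}" "insert e F"] f0 assms by auto
  show "t e f0 f \<noteq> e" using tx by simp
  show "t e f0 f \<notin> F"
  proof
    assume d: "t e f0 f \<in> F"
    have "e \<in> cl {f0, f, t e f0 f}" using t_cl_swap[OF E ne] .
    moreover have "cl {f0, f, t e f0 f} \<subseteq> cl F" using d f0 assms by (intro cl_mono) auto
    ultimately show False using flat_cl_eq[OF fl] eF by auto
  qed
qed

lemma IL2: "inj_on (t e f0) (F - {f0})"
proof
  fix f g assume f: "f \<in> F - {f0}" and g: "g \<in> F - {f0}" and eq: "t e f0 f = t e f0 g"
  show "f = g"
  proof (rule ccontr)
    assume fg: "f \<noteq> g"
    have E: "e \<in> E" "f0 \<in> E" "f \<in> E" "g \<in> E" using eE f0 f g FE by auto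
    have ne: "e \<noteq> f0" "e \<noteq> f" "f0 \<noteq> f" "e \<noteq> g" "f0 \<noteq> g" using eF f0 f g by auto
    note tf = t_ex[of e f0 f] and tg = t_ex[of e f0 g]
    have c1: "cl {e, f0, t e f0 f} = cl {e,f0,f}"
      using tf E ne cl_incl[of "{e,f0,f}"] by (intro K) auto
    have c2: "cl {e, f0, t e f0 g} = cl {e,f0,g}"
      using tg E ne cl_incl[of "{e,f0,g}"] by (intro K) auto
    have "g \<in> cl {e,f0,f}" using c1 c2 eq cl_incl[of "{e,f0,g}"] E by auto
    then have "cl {f0,f,g} = cl {e,f0,f}"
      using E ne fg cl_incl[of "{e,f0,f}"] by (intro K) auto
    then have "e \<in> cl {f0,f,g}" using cl_incl[of "{e,f0,f}"] E by auto
    moreover have "cl {f0, f, g} \<subseteq> cl F" using f0 f g by (intro cl_mono) auto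
    ultimately show False using flat_cl_eq[OF fl] eF by auto
  qed
qed

lemma IL3: "F \<union> {e} \<union> t e f0 ` (F - {f0}) \<subseteq> cl (insert e F)"
proof -
  have "insert e F \<subseteq> cl (insert e F)" using cl_incl[of "insert e F"] FE eE by simp
  then show ?thesis using IL1 by auto
qed

lemma IL4: "card (F \<union> {e} \<union> t e f0 ` (F - {f0})) = 2 * card F"
proof -
  have fin: "finite F" using finite_subset[OF FE finE] .
  have "\<forall>f\<in>F-{f0}. t e f0 f \<notin> F \<and> t e f0 f \<noteq> e" using IL1 by blast
  then have d1: "(F \<union> {e}) \<inter> t e f0 ` (F - {f0}) = {}" by force
  have "card (F \<union> {e} \<union> t e f0 ` (F - {f0})) = card (F \<union> {e}) + card (t e f0 ` (F - {f0}))"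
    using d1 fin by (intro card_Un_disjoint) auto
  also have "card (F \<union> {e}) = Suc (card F)" using eF fin by simp
  also have "card (t e f0 ` (F - {f0})) = card F - 1" using card_image[OF IL2] f0 fin by simp
  moreover have "card F \<ge> 1" using f0 fin by (simp add: Suc_le_eq card_gt_0_iff) blast
  ultimately show ?thesis by simp
qed

lemma IL5: "2 * card F \<le> card (cl (insert e F))"
proof -
  have "card (F \<union> {e} \<union> t e f0 ` (F - {f0})) \<le> card (cl (insert e F))"
    by (rule card_mono[OF finite_subset[OF cl_sub finE] IL3])
  then show ?thesis using IL4 by simp
qed

end

lemma L1: "finite I \<Longrightarrow> indep I \<Longrightarrow> I \<noteq> {} \<Longrightarrow> 2 ^ (card I - 1) \<le> card (cl I)"
proof (induction I rule: finite_induct)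
  case empty then show ?case by simp
next
  case (insert x F)
  have xE: "x \<in> E" using insert indep_sub by blast
  show ?case
  proof (cases "F = {}")
    case True then show ?thesis using cl_single xE by simp
  next
    case False
    have iF: "indep F" using insert indep_mono by blast
    have IH: "2 ^ (card F - 1) \<le> card (cl F)" using insert.IH iF False by blast
    have FE: "F \<subseteq> E" using iF indep_sub by blast
    have xcl: "x \<notin> cl F" using cl_char[OF iF xE insert(2)] insert by blast
    obtain f0 where f0: "f0 \<in> F" using False by blast
    have "f0 \<in> cl F" using f0 cl_incl[OF FE] by blast
    then have "2 * card (cl F) \<le> card (cl (insert x (cl F)))"
      using IL5[OF flat_cl _ xE xcl] by simp
    also have "cl (insert x (cl F)) = cl (insert x F)" using cl_insert_cl[OF FE xE] .
    finally have "2 * card (cl F) \<le> card (cl (insert x F))" .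
    moreover have "card (insert x F) = Suc (card F)" using insert by simp
    moreover have "card F \<ge> 1" using False insert(1) by (simp add: Suc_le_eq card_gt_0_iff)
    ultimately have "2 ^ (card (insert x F) - 1) = 2 * 2 ^ (card F - 1)"
      by (cases "card F") simp_all
    also have "\<dots> \<le> 2 * card (cl F)" using IH by simp
    finally show ?thesis using \<open>2 * card (cl F) \<le> card (cl (insert x F))\<close> by linarith
  qed
qed

lemma flat_lower: assumes "flat E indep F" "rk F \<ge> 1" shows "2 ^ (rk F - 1) \<le> card F"
proof -
  obtain I where I: "I \<subseteq> F" "indep I" "card I = rk F" using rk_obtain by blast
  have "cl I = F" using span_flat[OF I(2) I(1) assms(1) I(3)] .
  moreover have "I \<noteq> {}" using I assms by auto
  ultimately show ?thesis using L1[OF indep_fin[OF I(2)] I(2)] I by simp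
qed

lemma rk_le_r: "X \<subseteq> E \<Longrightarrow> rk X \<le> r" using rk_mono[of X E] rkE by simp

lemma L2: "flat E indep F \<Longrightarrow> 2 ^ (r - rk F) * card F \<le> card E"
proof (induction "r - rk F" arbitrary: F rule: less_induct)
  case less
  have FE: "F \<subseteq> E" using less.prems flat_sub by blast
  show ?case
  proof (cases "rk F = r")
    case True
    then have "F = E" using flat_full[OF less.prems] rkE by simp
    then show ?thesis using True rkE by simp
  next
    case False
    have lt: "rk F < r" using False rk_le_r FE by (simp add: le_neq_implies_less)
    show ?thesis
    proof (cases "F = {}")
      case True then show ?thesis by simp
    next
      case Fne: False
      have "F \<noteq> E" using False rkE by blast
      then obtain e where e: "e \<in> E" "e \<notin> F" using FE by blast
      obtain f0 where f0: "f0 \<in> F" using Fne by blast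
      define G where "G = cl (insert e F)"
      have "e \<notin> cl F" using e flat_cl_eq less.prems by blast
      then have rG: "rk G = Suc (rk F)" unfolding G_def using rk_cl cl_notin_rk e by simp
      then have "r - rk G < r - rk F" using lt by simp
      then have IH: "2 ^ (r - rk G) * card G \<le> card E" using less.hyps[of G] flat_cl[of "insert e F"] unfolding G_def by simp
      have "2 * card F \<le> card G" unfolding G_def using IL5[OF less.prems f0 e] .
      then have "2 ^ (r - rk G) * (2 * card F) \<le> 2 ^ (r - rk G) * card G" by simp
      moreover have "r - rk F = Suc (r - rk G)" using rG lt by simp
      then have "2 ^ (r - rk F) * card F = 2 ^ (r - rk G) * (2 * card F)" by simp
      ultimately show ?thesis using IH by linarith
    qed
  qed
qed

lemma main_ineq: assumes "r \<ge> 1" shows "2 ^ (r - 1) \<le> card E"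
proof -
  have "E \<noteq> {}" using rkE assms rk_indep[OF indep_empty] by auto
  then obtain e where e: "e \<in> E" by blast
  have "flat E indep {e}" using flat_cl[of "{e}"] cl_single e by simp
  moreover have "rk {e} = 1" using rk_indep indep1 e by simp
  ultimately show ?thesis using L2[of "{e}"] by simp
qed

end


locale eqc = nice +
  assumes cardE: "card E = 2 ^ (r - 1)" and r1: "r \<ge> 1"
begin

lemma flat_card: assumes "flat E indep F" "rk F \<ge> 1" shows "card F = 2 ^ (rk F - 1)"
proof -
  have kr: "rk F \<le> r" using rk_le_r flat_sub[OF assms(1)] by blast
  have "2 ^ (r - rk F) * card F \<le> 2 ^ (r - 1)" using L2[OF assms(1)] cardE by simp
  also have "(2::nat) ^ (r - 1) = 2 ^ (r - rk F) * 2 ^ (rk F - 1)"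
    using kr assms(2) by (simp flip: power_add)
  finally have "card F \<le> 2 ^ (rk F - 1)" by simp
  with flat_lower[OF assms] show ?thesis by simp
qed

lemma plane: assumes "a \<in> E" "b \<in> E" "c \<in> E" "a \<noteq> b" "a \<noteq> c" "b \<noteq> c"
  shows "cl {a,b,c} = {a,b,c,t a b c}"
proof -
  note tx = t_ex[OF assms]
  have c4: "card (cl {a,b,c}) = 4" using flat_card[OF flat_cl] rk3[OF assms] by simp
  have sub: "{a,b,c,t a b c} \<subseteq> cl {a,b,c}" using tx cl_incl[of "{a,b,c}"] assms by simp
  have "card {a,b,c,t a b c} = 4" using tx assms by simp
  then show ?thesis using card_subset_eq[OF finite_subset[OF cl_sub finE] sub] c4 by simp
qed

lemma t_swap: assumes "a \<in> E" "b \<in> E" "c \<in> E" "a \<noteq> b" "a \<noteq> c" "b \<noteq> c"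
  shows "t a b (t a b c) = c"
proof -
  note tx = t_ex[OF assms]
  have wE: "t a b c \<in> E" using t_E[OF assms] .
  have "cl {a,b,t a b c} = cl {a,b,c}"
    using tx assms cl_incl[of "{a,b,c}"] by (intro K) auto
  then have "cl {a,b,t a b c} = {a,b,c,t a b c}" using plane[OF assms] by simp
  moreover note ty = t_ex[OF assms(1,2) wE assms(4) tx(2)[symmetric] tx(3)[symmetric]]
  ultimately show ?thesis by auto
qed

lemma struct: assumes fl: "flat E indep F" and k1: "rk F \<ge> 1" and kr: "rk F < r"
  and eE: "e \<in> E" and eF: "e \<notin> F" and f0: "f0 \<in> F"
  shows "cl (insert e F) = F \<union> {e} \<union> t e f0 ` (F - {f0})"
proof -
  define G where "G = cl (insert e F)"
  have "e \<notin> cl F" using eF flat_cl_eq[OF fl] by simp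
  then have rG: "rk G = Suc (rk F)" unfolding G_def using rk_cl cl_notin_rk eE by simp
  have "card G = 2 ^ (rk F)" using flat_card[of G] flat_cl rG unfolding G_def by simp
  also have "\<dots> = 2 * card F" using flat_card[OF fl k1] k1 by (cases "rk F") simp_all
  finally have cG: "card G = 2 * card F" .
  show ?thesis
    using card_subset_eq[OF finite_subset[OF cl_sub finE] IL3[OF fl f0 eE eF]] IL4[OF fl f0 eE eF] cG
    unfolding G_def by simp
qed

context
  fixes H
  assumes Hf: "flat E indep H" and Hr: "rk H = r - 1"
begin

lemma HE: "H \<subseteq> E" using flat_sub[OF Hf] .

lemma P1: assumes "a \<in> E" "b \<in> E" "c \<in> E" "a \<noteq> b" "a \<noteq> c" "b \<noteq> c"
  and "a \<in> H" "b \<in> H" "c \<in> H" shows "t a b c \<in> H"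
proof -
  have "cl {a,b,c} \<subseteq> cl H" using assms by (intro cl_mono) auto
  then show ?thesis using t_ex[OF assms(1-6)] flat_cl_eq[OF Hf] by auto
qed

lemma P2: assumes "a \<in> E" "b \<in> E" "c \<in> E" "a \<noteq> b" "a \<noteq> c" "b \<noteq> c"
  and "a \<notin> H" "b \<in> H" "c \<in> H" shows "t a b c \<notin> H"
proof
  assume w: "t a b c \<in> H"
  have "cl {b,c,t a b c} \<subseteq> cl H" using assms w by (intro cl_mono) auto
  then show False using t_cl_swap[OF assms(1-6)] flat_cl_eq[OF Hf] assms by auto
qed

lemma P3: assumes E3: "a \<in> E" "b \<in> E" "c \<in> E" and ne: "a \<noteq> b" "a \<noteq> c" "b \<noteq> c"
  and out: "a \<notin> H" "b \<notin> H" "c \<notin> H" shows "t a b c \<notin> H"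
proof
  assume w: "t a b c \<in> H"
  define w where "w = t a b c"
  have wH: "w \<in> H" using w w_def by simp
  have r3: "r \<ge> 3" using rk3[OF E3 ne] rk_le_r[of "{a,b,c}"] E3 by simp
  have "cl (insert a H) = H \<union> {a} \<union> t a w ` (H - {w})"
    using struct[OF Hf _ _ E3(1) out(1) wH] Hr r3 by simp
  moreover have "cl (insert a H) = E"
  proof (rule flat_full[OF flat_cl])
    have "a \<notin> cl H" using out flat_cl_eq[OF Hf] by simp
    then show "rk (cl (insert a H)) = rk E" using rk_cl cl_notin_rk E3 Hr rkE r3 by simp
  qed
  ultimately have "b \<in> t a w ` (H - {w})" using E3 out ne by auto
  then obtain h where h: "h \<in> H" "h \<noteq> w" "b = t a w h" by blast
  have hE: "h \<in> E" "w \<in> E" using h wH HE by auto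
  have "t a w b = h" using t_swap[OF E3(1) hE(2) hE(1)] h out wH by auto
  moreover have "t a b w = c" unfolding w_def using t_swap[OF E3 ne] .
  ultimately have "h = c" using t_perm2 by metis
  then show False using h out by simp
qed

lemma P4: assumes E3: "a \<in> E" "b \<in> E" "c \<in> E" and ne: "a \<noteq> b" "a \<noteq> c" "b \<noteq> c"
  and "a \<notin> H" "b \<notin> H" "c \<in> H" shows "t a b c \<in> H"
proof (rule ccontr)
  assume w: "t a b c \<notin> H"
  note tx = t_ex[OF E3 ne]
  have "t a b (t a b c) \<notin> H"
    using P3[OF E3(1,2) t_E[OF E3 ne] ne(1) tx(2)[symmetric] tx(3)[symmetric]] assms w by simp
  then show False using t_swap[OF E3 ne] assms by simp
qed

lemma t_par: assumes E3: "a \<in> E" "b \<in> E" "c \<in> E" and ne: "a \<noteq> b" "a \<noteq> c" "b \<noteq> c"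
  shows "(t a b c \<notin> H) \<longleftrightarrow> ((a \<notin> H) \<noteq> ((b \<notin> H) \<noteq> (c \<notin> H)))"
proof -
  have p1: "t a b c = t b a c" by (rule t_perm1)
  have p2: "t a b c = t c a b" by (metis t_perm1 t_perm2)
  have p3: "t a b c = t a c b" by (rule t_perm2)
  have p4: "t a b c = t b c a" by (metis t_perm1 t_perm2)
  show ?thesis
  proof (cases "a \<in> H"; cases "b \<in> H"; cases "c \<in> H")
    assume "a \<in> H" "b \<in> H" "c \<in> H" then show ?thesis using P1[OF E3 ne] by simp
  next
    assume "a \<in> H" "b \<in> H" "c \<notin> H" then show ?thesis using P2[of c a b] E3 ne p2 by auto
  next
    assume "a \<in> H" "b \<notin> H" "c \<in> H" then show ?thesis using P2[of b a c] E3 ne p1 by auto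
  next
    assume "a \<in> H" "b \<notin> H" "c \<notin> H" then show ?thesis using P4[of b c a] E3 ne p4 by auto
  next
    assume "a \<notin> H" "b \<in> H" "c \<in> H" then show ?thesis using P2[OF E3 ne] by simp
  next
    assume "a \<notin> H" "b \<in> H" "c \<notin> H" then show ?thesis using P4[of a c b] E3 ne p3 by auto
  next
    assume "a \<notin> H" "b \<notin> H" "c \<in> H" then show ?thesis using P4[OF E3 ne] by simp
  next
    assume "a \<notin> H" "b \<notin> H" "c \<notin> H" then show ?thesis using P3[OF E3 ne] by simp
  qed
qed

end
end


declare add_bit_eq_xor[simp del] mult_bit_eq_and[simp del]

lemma bit_one_one [simp]: "(1::bit) + 1 = 0" by (simp add: add_bit_eq_xor)
lemma bit_add_self [simp]: "(x::bit) + x = 0" by (cases x) simp_all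
lemma bit_eq_add: "(x::bit) + y = 0 \<longleftrightarrow> x = y" by (cases x; cases y) simp_all

inductive_set tcl :: "('b \<Rightarrow> 'b \<Rightarrow> 'b \<Rightarrow> 'b) \<Rightarrow> 'b set \<Rightarrow> 'b set" for T S where
  base: "x \<in> S \<Longrightarrow> x \<in> tcl T S"
| step: "a \<in> tcl T S \<Longrightarrow> b \<in> tcl T S \<Longrightarrow> c \<in> tcl T S \<Longrightarrow> a \<noteq> b \<Longrightarrow> a \<noteq> c \<Longrightarrow> b \<noteq> c
         \<Longrightarrow> T a b c \<in> tcl T S"

lemma tcl_mono: assumes "S \<subseteq> S'" shows "tcl T S \<subseteq> tcl T S'"
proof
  fix x assume "x \<in> tcl T S" then show "x \<in> tcl T S'"
    by (induction rule: tcl.induct) (use assms in \<open>auto intro: tcl.intros\<close>)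
qed

definition T2 :: "(nat \<Rightarrow> bit) \<Rightarrow> (nat \<Rightarrow> bit) \<Rightarrow> (nat \<Rightarrow> bit) \<Rightarrow> (nat \<Rightarrow> bit)" where
  "T2 u v w = (\<lambda>i. u i + v i + w i)"

definition vsum :: "(nat \<Rightarrow> bit) set \<Rightarrow> nat \<Rightarrow> bit" where
  "vsum Z = (\<lambda>i. \<Sum>v\<in>Z. v i)"

lemma T2_closed: assumes "u \<in> tcl T2 Y" "v \<in> tcl T2 Y" "w \<in> tcl T2 Y" shows "T2 u v w \<in> tcl T2 Y"
proof -
  have e1: "T2 u u w = w" for u w unfolding T2_def by (rule ext) (simp add: add.assoc[symmetric])
  have e2: "T2 u w u = w" for u w unfolding T2_def by (rule ext) (metis add.commute add.left_commute bit_add_self add_0)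
  have e3: "T2 w u u = w" for u w unfolding T2_def by (rule ext) (metis add.assoc bit_add_self add_0_right)
  show ?thesis
  proof (cases "u = v \<or> u = w \<or> v = w")
    case True then show ?thesis using assms e1 e2 e3 by auto
  next
    case False then show ?thesis using assms by (auto intro: tcl.step)
  qed
qed

definition sd :: "'b set \<Rightarrow> 'b set \<Rightarrow> 'b set" where "sd A B = (A - B) \<union> (B - A)"

lemma sum_sd: fixes g :: "'b \<Rightarrow> bit" assumes "finite A" "finite B"
  shows "(\<Sum>x\<in>sd A B. g x) = (\<Sum>x\<in>A. g x) + (\<Sum>x\<in>B. g x)"
proof -
  have a: "(\<Sum>x\<in>A. g x) = (\<Sum>x\<in>A - B. g x) + (\<Sum>x\<in>A \<inter> B. g x)"
    using assms by (metis sum.Int_Diff add.commute)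
  have b: "(\<Sum>x\<in>B. g x) = (\<Sum>x\<in>B - A. g x) + (\<Sum>x\<in>A \<inter> B. g x)"
    using assms by (metis sum.Int_Diff add.commute Int_commute)
  have c: "(\<Sum>x\<in>sd A B. g x) = (\<Sum>x\<in>A - B. g x) + (\<Sum>x\<in>B - A. g x)"
    unfolding sd_def using assms by (intro sum.union_disjoint) auto
  show ?thesis unfolding a b c
    by (metis add.assoc add.commute bit_add_self add_0_right add.left_commute)
qed

lemma of_nat_bit_odd: "(of_nat n :: bit) = (if odd n then 1 else 0)"
proof (induction n)
  case 0 then show ?case by simp
next
  case (Suc n)
  have "(of_nat (Suc n) :: bit) = 1 + of_nat n" by (simp only: of_nat_Suc)
  then show ?case using Suc by (cases "odd n") simp_all
qed

lemma card_bit: "finite A \<Longrightarrow> (of_nat (card A) :: bit) = (\<Sum>x\<in>A. 1)" by simp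

lemma odd_sd: assumes "finite A" "finite B"
  shows "odd (card (sd A B)) \<longleftrightarrow> (odd (card A) \<noteq> odd (card B))"
proof -
  have f: "finite (sd A B)" unfolding sd_def using assms by simp
  have "(of_nat (card (sd A B)) :: bit) = of_nat (card A) + of_nat (card B)"
    unfolding card_bit[OF f] card_bit[OF assms(1)] card_bit[OF assms(2)] by (rule sum_sd[OF assms])
  then show ?thesis unfolding of_nat_bit_odd by (auto split: if_splits)
qed

lemma vsum_sd: "finite A \<Longrightarrow> finite B \<Longrightarrow> vsum (sd A B) = (\<lambda>i. vsum A i + vsum B i)"
  unfolding vsum_def by (rule ext) (rule sum_sd)

definition odd_sums :: "(nat \<Rightarrow> bit) set \<Rightarrow> (nat \<Rightarrow> bit) set" where
  "odd_sums Y = {vsum Z | Z. Z \<subseteq> Y \<and> finite Z \<and> odd (card Z)}"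

lemma tcl_sub_odd: "tcl T2 Y \<subseteq> odd_sums Y"
proof
  fix x assume "x \<in> tcl T2 Y" then show "x \<in> odd_sums Y"
  proof (induction rule: tcl.induct)
    case (base x)
    have "vsum {x} = x" unfolding vsum_def by simp
    then show ?case using base unfolding odd_sums_def by (intro CollectI exI[of _ "{x}"]) auto
  next
    case (step a b c)
    obtain A where A: "a = vsum A" "A \<subseteq> Y" "finite A" "odd (card A)" using step.IH(1) unfolding odd_sums_def by blast
    obtain B where B: "b = vsum B" "B \<subseteq> Y" "finite B" "odd (card B)" using step.IH(2) unfolding odd_sums_def by blast
    obtain C where C: "c = vsum C" "C \<subseteq> Y" "finite C" "odd (card C)" using step.IH(3) unfolding odd_sums_def by blast
    define Z where "Z = sd (sd A B) C"
    have fAB: "finite (sd A B)" unfolding sd_def using A B by simp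
    have "vsum Z = T2 a b c" unfolding Z_def T2_def
      using vsum_sd[OF fAB C(3)] vsum_sd[OF A(3) B(3)] A B C by simp
    moreover have "odd (card Z)" unfolding Z_def using odd_sd[OF fAB C(3)] odd_sd[OF A(3) B(3)] A B C by simp
    moreover have "Z \<subseteq> Y" "finite Z" unfolding Z_def sd_def using A B C by auto
    ultimately have "\<exists>Z'. T2 a b c = vsum Z' \<and> Z' \<subseteq> Y \<and> finite Z' \<and> odd (card Z')"
      by (intro exI[of _ Z]) simp
    then show ?case unfolding odd_sums_def by simp
  qed
qed

lemma odd_sub_tcl: "Z \<subseteq> Y \<Longrightarrow> finite Z \<Longrightarrow> odd (card Z) \<Longrightarrow> vsum Z \<in> tcl T2 Y"
proof (induction "card Z" arbitrary: Z rule: less_induct)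
  case less
  show ?case
  proof (cases "card Z = 1")
    case True
    then obtain z where z: "Z = {z}" using card_1_singletonE by blast
    have "vsum {z} = z" unfolding vsum_def by simp
    then show ?thesis using z less.prems by (auto intro: tcl.base)
  next
    case False
    then have c3: "card Z \<ge> 3" using less.prems by presburger
    then obtain z1 where z1: "z1 \<in> Z" by fastforce
    have "card (Z - {z1}) \<ge> 2" using c3 z1 less.prems by simp
    then have "Z - {z1} \<noteq> {}" by (intro notI) simp
    then obtain z2 where z2: "z2 \<in> Z - {z1}" by blast
    define R where "R = Z - {z1} - {z2}"
    have cR: "card R = card Z - 2" unfolding R_def using z1 z2 less.prems by simp
    have RZ: "R \<subseteq> Y" "finite R" using less.prems unfolding R_def by auto
    have "odd (card R)" using cR c3 less.prems by simp
    then have IH: "vsum R \<in> tcl T2 Y" using less.hyps[of R] cR c3 RZ by simp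
    have "Z = insert z1 (insert z2 R)" unfolding R_def using z1 z2 by auto
    moreover have "z1 \<notin> insert z2 R" "z2 \<notin> R" unfolding R_def using z2 by auto
    ultimately have "vsum Z = T2 z1 z2 (vsum R)" unfolding vsum_def T2_def using RZ
      by (simp add: add.assoc)
    moreover have "z1 \<in> tcl T2 Y" "z2 \<in> tcl T2 Y" using z1 z2 less.prems by (auto intro: tcl.base)
    ultimately show ?thesis using T2_closed IH by simp
  qed
qed

lemma tcl_odd: "tcl T2 Y = odd_sums Y"
  using tcl_sub_odd odd_sub_tcl unfolding odd_sums_def by blast


lemma sum_indicator_bit: assumes "finite Y"
  shows "(\<Sum>v\<in>Y. c v * (v::nat\<Rightarrow>bit) i) = (\<Sum>v\<in>{v\<in>Y. c v = 1}. v i)"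
proof -
  have "(\<Sum>v\<in>{v\<in>Y. c v = 1}. v i) = (\<Sum>v\<in>Y. if c v = 1 then v i else 0)"
    using assms by (rule sum.inter_filter)
  also have "\<dots> = (\<Sum>v\<in>Y. c v * v i)"
  proof (rule sum.cong)
    fix x show "(if c x = 1 then x i else 0) = c x * x i" by (cases "c x") simp_all
  qed simp
  finally show ?thesis by simp
qed

lemma gf2_iff: assumes AG: "Y \<subseteq> AG_ground r" and fY: "finite Y"
  shows "gf2_lin_indep Y \<longleftrightarrow> (\<forall>y\<in>Y. y \<notin> tcl T2 (Y - {y}))"
proof
  assume g: "gf2_lin_indep Y"
  show "\<forall>y\<in>Y. y \<notin> tcl T2 (Y - {y})"
  proof (intro ballI notI)
    fix y assume y: "y \<in> Y" and yt: "y \<in> tcl T2 (Y - {y})"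
    then obtain Z where Z: "y = vsum Z" "Z \<subseteq> Y - {y}" "finite Z" "odd (card Z)"
      unfolding tcl_odd odd_sums_def by blast
    define c where "c = (\<lambda>v. if v \<in> insert y Z then (1::bit) else 0)"
    have "(\<Sum>v\<in>Y. c v * v i) = 0" for i
    proof -
      have "{v\<in>Y. c v = 1} = insert y Z" unfolding c_def using Z y by auto
      then have "(\<Sum>v\<in>Y. c v * v i) = (\<Sum>v\<in>insert y Z. v i)" using sum_indicator_bit[OF fY] by simp
      also have "\<dots> = y i + vsum Z i"
      proof -
        have yZ: "y \<notin> Z" using Z(2) by blast
        show ?thesis unfolding vsum_def using Z(3) yZ by simp
      qed
      also have "\<dots> = 0" using Z(1) by simp
      finally show ?thesis .
    qed
    then have "\<forall>v\<in>Y. c v = 0" using g unfolding gf2_lin_indep_def by blast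
    then have "c y = 0" using y by blast
    then show False unfolding c_def by simp
  qed
next
  assume h: "\<forall>y\<in>Y. y \<notin> tcl T2 (Y - {y})"
  show "gf2_lin_indep Y" unfolding gf2_lin_indep_def
  proof (intro conjI fY allI impI ballI)
    fix c :: "(nat \<Rightarrow> bit) \<Rightarrow> bit" and v0
    assume hs: "\<forall>i. (\<Sum>v\<in>Y. c v * v i) = 0" and v0: "v0 \<in> Y"
    show "c v0 = 0"
    proof (rule ccontr)
      assume "c v0 \<noteq> 0"
      then have cv0: "c v0 = 1" by simp
      define Z where "Z = {v\<in>Y. c v = 1}"
      have fZ: "finite Z" unfolding Z_def using fY by simp
      have v0Z: "v0 \<in> Z" unfolding Z_def using v0 cv0 by simp
      have sZ: "(\<Sum>v\<in>Z. v i) = 0" for i using hs sum_indicator_bit[OF fY] unfolding Z_def by metis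
      have "(\<Sum>v\<in>Z. v 0) = (\<Sum>v\<in>Z. 1)"
        by (rule sum.cong) (use AG Z_def AG_ground_def in auto)
      then have "(of_nat (card Z) :: bit) = 0" using sZ[of 0] by simp
      then have ev: "even (card Z)" unfolding of_nat_bit_odd by (auto split: if_splits)
      define Z' where "Z' = Z - {v0}"
      have cZ': "card Z' = card Z - 1" unfolding Z'_def using v0Z fZ by simp
      have "card Z \<ge> 1" using v0Z fZ by (simp add: Suc_le_eq card_gt_0_iff) blast
      then have oZ': "odd (card Z')" using cZ' ev by (cases "card Z") simp_all
      have "vsum Z' = v0"
      proof
        fix i
        have "(\<Sum>v\<in>Z. v i) = v0 i + (\<Sum>v\<in>Z'. v i)"
          unfolding Z'_def using v0Z fZ by (simp add: sum.remove)
        then have "v0 i + vsum Z' i = 0" using sZ[of i] unfolding vsum_def by simp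
        then show "vsum Z' i = v0 i" using bit_eq_add by metis
      qed
      moreover have "Z' \<subseteq> Y - {v0}" "finite Z'" unfolding Z'_def Z_def using fY by auto
      ultimately have "v0 \<in> tcl T2 (Y - {v0})" using odd_sub_tcl oZ' by metis
      then show False using h v0 by blast
    qed
  qed
qed

definition chi :: "nat set \<Rightarrow> nat \<Rightarrow> bit" where
  "chi S = (\<lambda>i. if i = 0 \<or> i \<in> S then 1 else 0)"

lemma AG_chi: assumes r1: "r \<ge> 1" shows "AG_ground r = chi ` Pow {1..<r}"
proof
  show "AG_ground r \<subseteq> chi ` Pow {1..<r}"
  proof
    fix v assume v: "v \<in> AG_ground r"
    have "v = chi {i\<in>{1..<r}. v i = 1}"
    proof
      fix i show "v i = chi {i\<in>{1..<r}. v i = 1} i"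
        using v unfolding chi_def AG_ground_def by (cases "i = 0"; cases "i < r") auto
    qed
    then show "v \<in> chi ` Pow {1..<r}" by blast
  qed
  show "chi ` Pow {1..<r} \<subseteq> AG_ground r"
    unfolding chi_def AG_ground_def using r1 by force
qed

lemma chi_inj: "inj_on chi (Pow {1..<r})"
proof
  fix S S' assume S: "S \<in> Pow {1..<r}" and S': "S' \<in> Pow {1..<r}" and eq: "chi S = chi S'"
  show "S = S'"
  proof
    show "S \<subseteq> S'"
    proof
      fix i assume i: "i \<in> S"
      then have h: "chi S i = 1" "i \<noteq> 0" using S unfolding chi_def by auto
      then have "chi S' i = 1" using eq by simp
      then show "i \<in> S'" using h(2) unfolding chi_def by (simp split: if_splits)
    qed
    show "S' \<subseteq> S"
    proof
      fix i assume i: "i \<in> S'"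
      then have h: "chi S' i = 1" "i \<noteq> 0" using S' unfolding chi_def by auto
      then have "chi S i = 1" using eq by simp
      then show "i \<in> S" using h(2) unfolding chi_def by (simp split: if_splits)
    qed
  qed
qed

lemma card_AG: "r \<ge> 1 \<Longrightarrow> card (AG_ground r) = 2 ^ (r - 1)"
  using AG_chi card_image[OF chi_inj, of r] by (simp add: card_Pow)

lemma finite_AG: "r \<ge> 1 \<Longrightarrow> finite (AG_ground r)" using AG_chi by simp

lemma chi_step: "j \<notin> S \<Longrightarrow> j \<noteq> 0 \<Longrightarrow> chi (insert j S) = T2 (chi S) (chi {}) (chi {j})"
  unfolding chi_def T2_def by (rule ext) auto

lemma AG_span: "r \<ge> 1 \<Longrightarrow> AG_ground r \<subseteq> tcl T2 (insert (chi {}) ((\<lambda>j. chi {j}) ` {1..<r}))"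
proof -
  let ?B = "insert (chi {}) ((\<lambda>j. chi {j}) ` {1..<r})"
  have "finite S \<Longrightarrow> S \<subseteq> {1..<r} \<Longrightarrow> chi S \<in> tcl T2 ?B" for S
  proof (induction S rule: finite_induct)
    case empty then show ?case by (auto intro: tcl.base)
  next
    case (insert j S)
    have "chi (insert j S) = T2 (chi S) (chi {}) (chi {j})" using insert by (intro chi_step) auto
    moreover have "chi {} \<in> tcl T2 ?B" "chi {j} \<in> tcl T2 ?B" using insert by (auto intro: tcl.base)
    ultimately show ?case using T2_closed insert by simp
  qed
  moreover assume "r \<ge> 1"
  ultimately show ?thesis using AG_chi finite_subset[of _ "{1..<r}"] by auto
qed


context eqc begin

lemma tcl_sub_cl: assumes "S \<subseteq> E" shows "tcl t S \<subseteq> cl S"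
proof
  fix x assume "x \<in> tcl t S" then show "x \<in> cl S"
  proof (induction rule: tcl.induct)
    case (base x) then show ?case using cl_incl[OF assms] by blast
  next
    case (step a b c)
    have E: "a \<in> E" "b \<in> E" "c \<in> E" using step.IH cl_sub by auto
    have "cl {a,b,c} \<subseteq> cl (cl S)" using step.IH by (intro cl_mono) auto
    then show ?case using t_ex[OF E step.hyps(4-6)] cl_idem by auto
  qed
qed

lemma cl_sub_tcl_indep: "finite I \<Longrightarrow> indep I \<Longrightarrow> cl I \<subseteq> tcl t I"
proof (induction I rule: finite_induct)
  case empty then show ?case using cl_empty by simp
next
  case (insert x F)
  have xE: "x \<in> E" using insert indep_sub by blast
  show ?case
  proof (cases "F = {}")
    case True then show ?thesis using cl_single xE by (auto intro: tcl.base)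
  next
    case False
    have iF: "indep F" using insert(4) indep_mono by blast
    have FE: "F \<subseteq> E" using iF indep_sub by blast
    have IH: "cl F \<subseteq> tcl t F" using insert.IH iF by blast
    have xcl: "x \<notin> cl F" using cl_char[OF iF xE insert(2)] insert(4) by blast
    obtain f0 where f0: "f0 \<in> F" using False by blast
    have f0c: "f0 \<in> cl F" using f0 cl_incl[OF FE] by blast
    have rkF: "rk (cl F) = card F" using rk_cl rk_indep[OF iF] by simp
    have "card F \<ge> 1" using False insert(1) by (simp add: Suc_le_eq card_gt_0_iff)
    moreover have "card (insert x F) \<le> r" using rk_ge[OF insert(4) insert_subsetI[OF xE FE]] rkE by simp
    then have "card F < r" using insert by simp
    ultimately have st: "cl (insert x (cl F)) = cl F \<union> {x} \<union> t x f0 ` (cl F - {f0})"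
      using struct[OF flat_cl _ _ xE xcl f0c] rkF by simp
    have eq: "cl (insert x F) = cl F \<union> {x} \<union> t x f0 ` (cl F - {f0})"
      using st cl_insert_cl[OF FE xE] by simp
    have mono: "tcl t F \<subseteq> tcl t (insert x F)" by (rule tcl_mono) auto
    have xt: "x \<in> tcl t (insert x F)" by (auto intro: tcl.base)
    have "t x f0 g \<in> tcl t (insert x F)" if g: "g \<in> cl F - {f0}" for g
    proof (rule tcl.step)
      show "x \<in> tcl t (insert x F)" by (rule xt)
      show "f0 \<in> tcl t (insert x F)" using f0c IH mono by blast
      show "g \<in> tcl t (insert x F)" using g IH mono by blast
      show "x \<noteq> f0" "x \<noteq> g" "f0 \<noteq> g" using xcl f0c g by auto
    qed
    then show ?thesis unfolding eq using IH mono xt by blast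
  qed
qed

lemma tcl_eq_cl: assumes "S \<subseteq> E" shows "tcl t S = cl S"
proof
  show "tcl t S \<subseteq> cl S" using tcl_sub_cl[OF assms] .
  obtain I where I: "I \<subseteq> S" "indep I" "card I = rk S" using rk_obtain by blast
  have "I \<subseteq> cl S" using I(1) cl_incl[OF assms] by blast
  then have "cl I = cl S" using span_flat[OF I(2) _ flat_cl] I(3) rk_cl by simp
  then show "cl S \<subseteq> tcl t S" using cl_sub_tcl_indep[OF indep_fin[OF I(2)] I(2)] tcl_mono[OF I(1)] by blast
qed

lemma tcl_sub_E: "S \<subseteq> E \<Longrightarrow> tcl t S \<subseteq> E" using tcl_eq_cl cl_sub by simp

definition fmap :: "(nat \<Rightarrow> 'a) \<Rightarrow> 'a \<Rightarrow> nat \<Rightarrow> bit" where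
  "fmap bs x = (\<lambda>i. if i = 0 then 1 else if i < r \<and> x \<notin> cl (bs ` {0..<r} - {bs i}) then 1 else 0)"

lemma bit_xor3: "(if P then (1::bit) else 0) = (if A then 1 else 0) + (if B then 1 else 0) + (if C then 1 else 0)"
  if "P \<longleftrightarrow> (A \<noteq> (B \<noteq> C))"
  using that by (cases A; cases B; cases C) simp_all

context
  fixes bs :: "nat \<Rightarrow> 'a"
  assumes binj: "inj_on bs {0..<r}" and bind: "indep (bs ` {0..<r})"
begin

lemma BE: "bs ` {0..<r} \<subseteq> E" using indep_sub[OF bind] .

lemma hyp: assumes "i < r" shows "flat E indep (cl (bs ` {0..<r} - {bs i}))"
  "rk (cl (bs ` {0..<r} - {bs i})) = r - 1"
proof -
  show "flat E indep (cl (bs ` {0..<r} - {bs i}))" by (rule flat_cl)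
  have i: "indep (bs ` {0..<r} - {bs i})" using bind indep_mono by blast
  have "card (bs ` {0..<r}) = r" using card_image[OF binj] by simp
  then have "card (bs ` {0..<r} - {bs i}) = r - 1" using assms by simp
  then show "rk (cl (bs ` {0..<r} - {bs i})) = r - 1" using rk_cl rk_indep[OF i] by simp
qed

lemma bi_notin: assumes "i < r" shows "bs i \<notin> cl (bs ` {0..<r} - {bs i})"
proof -
  have i: "indep (bs ` {0..<r} - {bs i})" using bind indep_mono by blast
  have ins: "insert (bs i) (bs ` {0..<r} - {bs i}) = bs ` {0..<r}" using assms by auto
  have bE: "bs i \<in> E" using BE assms by auto
  have "bs i \<in> cl (bs ` {0..<r} - {bs i}) \<longleftrightarrow> \<not> indep (insert (bs i) (bs ` {0..<r} - {bs i}))"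
    by (rule cl_char[OF i bE]) simp
  then show ?thesis using ins bind by simp
qed

lemma bj_in: assumes "i < r" "j < r" "j \<noteq> i" shows "bs j \<in> cl (bs ` {0..<r} - {bs i})"
proof -
  have "bs j \<noteq> bs i" using binj assms inj_onD[OF binj] by fastforce
  then have "bs j \<in> bs ` {0..<r} - {bs i}" using assms by auto
  then show ?thesis using cl_incl[of "bs ` {0..<r} - {bs i}"] BE by blast
qed

lemma f_t: assumes E3: "a \<in> E" "b \<in> E" "c \<in> E" and ne: "a \<noteq> b" "a \<noteq> c" "b \<noteq> c"
  shows "fmap bs (t a b c) = T2 (fmap bs a) (fmap bs b) (fmap bs c)"
proof
  fix i
  show "fmap bs (t a b c) i = T2 (fmap bs a) (fmap bs b) (fmap bs c) i"
  proof (cases "i = 0")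
    case True then show ?thesis unfolding fmap_def T2_def by simp
  next
    case False
    show ?thesis
    proof (cases "i < r")
      case True
      note par = t_par[OF hyp(1)[OF True] hyp(2)[OF True] E3 ne]
      show ?thesis unfolding fmap_def T2_def using False True by (simp add: bit_xor3[OF par])
    next
      case nr: False
      then show ?thesis unfolding fmap_def T2_def using False by simp
    qed
  qed
qed

lemma f_AG: "x \<in> E \<Longrightarrow> fmap bs x \<in> AG_ground r"
  unfolding fmap_def AG_ground_def using r1 by auto

lemma f_b0: "fmap bs (bs 0) = chi {}"
proof
  fix i show "fmap bs (bs 0) i = chi {} i"
    unfolding fmap_def chi_def using bj_in[of i 0] r1 by auto
qed

lemma f_bj: assumes "1 \<le> j" "j < r" shows "fmap bs (bs j) = chi {j}"
proof
  fix i show "fmap bs (bs j) i = chi {j} i"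
    unfolding fmap_def chi_def using bj_in[of i j] bi_notin[of j] assms by auto
qed

lemma f_tcl: assumes SE: "S \<subseteq> E" shows "fmap bs ` tcl t S = tcl T2 (fmap bs ` S)"
proof
  show "fmap bs ` tcl t S \<subseteq> tcl T2 (fmap bs ` S)"
  proof
    fix y assume "y \<in> fmap bs ` tcl t S"
    then obtain x where x: "x \<in> tcl t S" "y = fmap bs x" by blast
    have "fmap bs x \<in> tcl T2 (fmap bs ` S)" using x(1)
    proof (induction rule: tcl.induct)
      case (base x) then show ?case by (auto intro: tcl.base)
    next
      case (step a b c)
      have E: "a \<in> E" "b \<in> E" "c \<in> E" using step.hyps(1-3) tcl_sub_E[OF SE] by auto
      show ?case using f_t[OF E step.hyps(4-6)] T2_closed[OF step.IH] by simp
    qed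
    then show "y \<in> tcl T2 (fmap bs ` S)" using x by simp
  qed
  show "tcl T2 (fmap bs ` S) \<subseteq> fmap bs ` tcl t S"
  proof
    fix y assume "y \<in> tcl T2 (fmap bs ` S)"
    then show "y \<in> fmap bs ` tcl t S"
    proof (induction rule: tcl.induct)
      case (base x) then show ?case by (auto intro: tcl.base)
    next
      case (step u v w)
      obtain a where a: "a \<in> tcl t S" "u = fmap bs a" using step.IH(1) by blast
      obtain b where b: "b \<in> tcl t S" "v = fmap bs b" using step.IH(2) by blast
      obtain c where c: "c \<in> tcl t S" "w = fmap bs c" using step.IH(3) by blast
      have E: "a \<in> E" "b \<in> E" "c \<in> E" using a b c tcl_sub_E[OF SE] by auto
      have ne: "a \<noteq> b" "a \<noteq> c" "b \<noteq> c" using a b c step.hyps(4-6) by auto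
      have "t a b c \<in> tcl t S" using a b c ne by (intro tcl.step)
      moreover have "T2 u v w = fmap bs (t a b c)" using f_t[OF E ne] a b c by simp
      ultimately show ?case by blast
    qed
  qed
qed

lemma f_surj: "fmap bs ` E = AG_ground r"
proof
  show "fmap bs ` E \<subseteq> AG_ground r" using f_AG by blast
  have "insert (chi {}) ((\<lambda>j. chi {j}) ` {1..<r}) \<subseteq> fmap bs ` (bs ` {0..<r})"
  proof -
    have "bs 0 \<in> bs ` {0..<r}" using r1 by simp
    then have "chi {} \<in> fmap bs ` (bs ` {0..<r})" using f_b0 by (metis image_eqI)
    moreover have "chi {j} \<in> fmap bs ` (bs ` {0..<r})" if "j \<in> {1..<r}" for j
    proof -
      have "bs j \<in> bs ` {0..<r}" using that by simp
      then show ?thesis using f_bj[of j] that by (metis atLeastLessThan_iff image_eqI)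
    qed
    ultimately show ?thesis by blast
  qed
  then have "tcl T2 (insert (chi {}) ((\<lambda>j. chi {j}) ` {1..<r})) \<subseteq> tcl T2 (fmap bs ` (bs ` {0..<r}))"
    by (rule tcl_mono)
  also have "\<dots> = fmap bs ` tcl t (bs ` {0..<r})" using f_tcl[OF BE] by simp
  also have "\<dots> \<subseteq> fmap bs ` E" using tcl_sub_E[OF BE] by blast
  finally show "AG_ground r \<subseteq> fmap bs ` E" using AG_span[OF r1] by blast
qed

lemma f_inj: "inj_on (fmap bs) E"
proof (rule eq_card_imp_inj_on[OF finE])
  show "card (fmap bs ` E) = card E" using f_surj card_AG[OF r1] cardE by simp
qed

lemma f_indep: assumes XE: "X \<subseteq> E" shows "indep X \<longleftrightarrow> AG_indep r (fmap bs ` X)"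
proof -
  have fin: "finite (fmap bs ` X)" using finite_subset[OF XE finE] by simp
  have sub: "fmap bs ` X \<subseteq> AG_ground r" using XE f_AG by blast
  have "indep X \<longleftrightarrow> (\<forall>x\<in>X. x \<notin> tcl t (X - {x}))"
    using indep_iff_cl[OF XE] tcl_eq_cl[of "X - _"] XE by auto
  also have "\<dots> \<longleftrightarrow> (\<forall>x\<in>X. fmap bs x \<notin> fmap bs ` tcl t (X - {x}))"
  proof -
    have "x \<notin> tcl t (X - {x}) \<longleftrightarrow> fmap bs x \<notin> fmap bs ` tcl t (X - {x})" if "x \<in> X" for x
    proof -
      have "tcl t (X - {x}) \<subseteq> E" using tcl_sub_E XE by blast
      then show ?thesis using inj_on_image_mem_iff[OF f_inj] that XE by blast
    qed
    then show ?thesis by blast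
  qed
  also have "\<dots> \<longleftrightarrow> (\<forall>x\<in>X. fmap bs x \<notin> tcl T2 (fmap bs ` X - {fmap bs x}))"
  proof -
    have "fmap bs ` tcl t (X - {x}) = tcl T2 (fmap bs ` X - {fmap bs x})" if "x \<in> X" for x
    proof -
      have "fmap bs ` (X - {x}) = fmap bs ` X - {fmap bs x}"
        using inj_on_image_set_diff[OF f_inj, of X "{x}"] that XE by auto
      moreover have "fmap bs ` tcl t (X - {x}) = tcl T2 (fmap bs ` (X - {x}))"
        using f_tcl[of "X - {x}"] XE by blast
      ultimately show ?thesis by simp
    qed
    then show ?thesis by simp
  qed
  also have "\<dots> \<longleftrightarrow> (\<forall>y\<in>fmap bs ` X. y \<notin> tcl T2 (fmap bs ` X - {y}))" by blast
  also have "\<dots> \<longleftrightarrow> gf2_lin_indep (fmap bs ` X)" using gf2_iff[OF sub fin] by simp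
  finally show ?thesis unfolding AG_indep_def using sub by simp
qed

end

lemma iso: "matroid_iso E indep (AG_ground r) (AG_indep r)"
proof -
  obtain B where B: "B \<subseteq> E" "indep B" "card B = r" using rk_obtain rkE by blast
  obtain bs where bs: "bij_betw bs {0..<r} B" using ex_bij_betw_nat_finite[OF indep_fin[OF B(2)]] B(3) by blast
  have binj: "inj_on bs {0..<r}" and bimg: "bs ` {0..<r} = B" using bs unfolding bij_betw_def by auto
  have bind: "indep (bs ` {0..<r})" using bimg B by simp
  show ?thesis unfolding matroid_iso_def
  proof (intro exI conjI allI impI)
    show "bij_betw (fmap bs) E (AG_ground r)" unfolding bij_betw_def
      using f_inj[OF binj bind] f_surj[OF binj bind] by simp
    fix X assume "X \<subseteq> E"
    then show "indep X = AG_indep r (fmap bs ` X)" using f_indep[OF binj bind] by simp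
  qed
qed

end

theorem lemma3p4:
  fixes E :: "'a set" and indep :: "'a set \<Rightarrow> bool" and r :: nat
  assumes "matroid E indep"
    and "simple_matroid E indep"
    and "mrank indep E = r"
    and "r \<ge> 1"
    and "\<not> (\<exists>C. circuit E indep C \<and> card C = 3)"
    and "\<not> (\<exists>X. claw E indep X \<and> card X = 3)"
  shows "card E \<ge> 2 ^ (r - 1) \<and>
         (card E = 2 ^ (r - 1) \<longrightarrow> matroid_iso E indep (AG_ground r) (AG_indep r))"
proof -
  interpret nice E indep r
    by (rule nice.intro, rule matr.intro, rule assms(1), unfold_locales) (use assms in auto)
  have ineq: "2 ^ (r - 1) \<le> card E" using main_ineq assms(4) .
  moreover have "card E = 2 ^ (r - 1) \<longrightarrow> matroid_iso E indep (AG_ground r) (AG_indep r)"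
  proof
    assume ce: "card E = 2 ^ (r - 1)"
    interpret eqc E indep r
      by (rule eqc.intro, unfold_locales) (use assms ce in auto)
    show "matroid_iso E indep (AG_ground r) (AG_indep r)" by (rule iso)
  qed
  ultimately show ?thesis by simp
qed

end
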